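(* For every digraph $X$ on vertex set $V$, $u_X(-m)=(-1)^{|V|}u_{\overline{X}}(m)$ as polynomials in $m$.
   Context: A digraph $X=(V,E)$: $V$ finite, $E\subset\{(u,v)\in V\times V\mid u\ne v\}$; $\overline{X}=(V,E^c)$ with $(u,v)\in E^c$ iff $u\ne v$, $(u,v)\notin E$. $\Sigma_V$ is the set of bijections $\sigma:[n]\to V$ ($n=|V|$), $X\mathrm{Des}(\sigma)=\{i\in[n-1]\mid(\sigma_i,\sigma_{i+1})\in E\}$; $F_I=\sum x_{i_1}\cdots x_{i_n}$ over $1\le i_1\le\cdots\le i_n$ with $i_j<i_{j+1}$ for $j\in I$; $U_X=\sum_{\sigma\in\Sigma_V}F_{X\mathrm{Des}(\sigma)}$; the Redei–Berge polynomial $u_X(m)$ is the polynomial in $m$ given by $U_X(1,\dots,1,0,\dots)$ with $m$ ones. *)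

theory Defs
  imports "HOL-Library.FuncSet" "HOL-Computational_Algebra.Polynomial"
begin

definition digraph :: "'a set \<Rightarrow> ('a \<times> 'a) set \<Rightarrow> bool" where
  "digraph V E \<longleftrightarrow> finite V \<and> E \<subseteq> {(u,v). u \<in> V \<and> v \<in> V \<and> u \<noteq> v}"

definition compl_edges :: "'a set \<Rightarrow> ('a \<times> 'a) set \<Rightarrow> ('a \<times> 'a) set" where
  "compl_edges V E = {(u,v). u \<in> V \<and> v \<in> V \<and> u \<noteq> v \<and> (u,v) \<notin> E}"

text \<open>Bijections sigma : [n] -> V, represented as lists [sigma_1, ..., sigma_n].\<close>
definition vertex_orders :: "'a set \<Rightarrow> 'a list set" where
  "vertex_orders V = {xs. distinct xs \<and> set xs = V}"

text \<open>X-descent set: i in [n-1] with (sigma_i, sigma_(i+1)) in E (1-based).\<close>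
definition XDes :: "('a \<times> 'a) set \<Rightarrow> 'a list \<Rightarrow> nat set" where
  "XDes E xs = {i \<in> {1..<length xs}. (xs ! (i - 1), xs ! i) \<in> E}"

text \<open>F_I(1,...,1,0,...) with m ones: number of sequences
  1 <= i_1 <= ... <= i_n <= m with i_j < i_(j+1) for j in I.\<close>
definition F_spec :: "nat \<Rightarrow> nat set \<Rightarrow> nat \<Rightarrow> nat" where
  "F_spec n I m = card {i \<in> {1..n} \<rightarrow>\<^sub>E {1..m}.
      \<forall>j \<in> {1..<n}. i j \<le> i (Suc j) \<and> (j \<in> I \<longrightarrow> i j < i (Suc j))}"

definition U_spec :: "'a set \<Rightarrow> ('a \<times> 'a) set \<Rightarrow> nat \<Rightarrow> nat" where
  "U_spec V E m = (\<Sum>xs \<in> vertex_orders V. F_spec (card V) (XDes E xs) m)"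

definition redei_berge :: "'a set \<Rightarrow> ('a \<times> 'a) set \<Rightarrow> rat poly" where
  "redei_berge V E = (THE p. \<forall>m::nat. poly p (of_nat m) = of_nat (U_spec V E m))"

end

theory Submission
  imports Defs
begin

lemma card_strict_lists:
  "card {xs::nat list. sorted_wrt (<) xs \<and> length xs = n \<and> set xs \<subseteq> {1..N}} = N choose n"
proof -
  have "bij_betw set {xs::nat list. sorted_wrt (<) xs \<and> length xs = n \<and> set xs \<subseteq> {1..N}}
          {B. B \<subseteq> {1..N} \<and> card B = n}"
  proof (rule bij_betw_byWitness[where f'=sorted_list_of_set])
    show "\<forall>a\<in>{xs::nat list. sorted_wrt (<) xs \<and> length xs = n \<and> set xs \<subseteq> {1..N}}.
            sorted_list_of_set (set a) = a"
      by (auto simp: sorted_list_of_set.idem_if_sorted_distinct strict_sorted_iff)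
    show "\<forall>a'\<in>{B. B \<subseteq> {1..N} \<and> card B = n}. set (sorted_list_of_set a') = a'"
      by (metis (no_types, lifting) finite_atLeastAtMost finite_subset mem_Collect_eq set_sorted_list_of_set)
    show "set ` {xs::nat list. sorted_wrt (<) xs \<and> length xs = n \<and> set xs \<subseteq> {1..N}}
           \<subseteq> {B. B \<subseteq> {1..N} \<and> card B = n}"
      by (auto simp: strict_sorted_iff distinct_card)
    show "sorted_list_of_set ` {B. B \<subseteq> {1..N} \<and> card B = n}
           \<subseteq> {xs::nat list. sorted_wrt (<) xs \<and> length xs = n \<and> set xs \<subseteq> {1..N}}"
    proof
      fix xs assume "xs \<in> sorted_list_of_set ` {B. B \<subseteq> {1..N} \<and> card B = n}"
      then obtain B where B: "B \<subseteq> {1..N}" "card B = n" "xs = sorted_list_of_set B" by auto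
      have "finite B" using B(1) finite_subset by blast
      then show "xs \<in> {xs::nat list. sorted_wrt (<) xs \<and> length xs = n \<and> set xs \<subseteq> {1..N}}"
        using B by auto
    qed
  qed
  then show ?thesis using bij_betw_same_card n_subsets[of "{1..N}" n] by force
qed

lemma strict_sorted_nth_ge:
  assumes "sorted_wrt (<) (xs::nat list)" "a \<le> b" "b < length xs"
  shows "xs!a + (b - a) \<le> xs!b"
  using assms(2,3)
proof (induction b rule: dec_induct)
  case base then show ?case by simp
next
  case (step b)
  have "xs!b < xs!Suc b" using sorted_wrt_nth_less[OF assms(1)] step by auto
  then show ?case using step by auto
qed

lemma map_upt1_nth: "t < n \<Longrightarrow> map f [1..<Suc n] ! t = f (Suc t)"
  by (subst nth_map_upt) auto

lemma map_upt1_length: "length (map f [1..<Suc n]) = n"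
  by simp

definition cc :: "nat set \<Rightarrow> nat \<Rightarrow> nat" where
  "cc I j = card ({1..<j} - I)"

lemma cc_Suc: "1 \<le> j \<Longrightarrow> cc I (Suc j) = cc I j + (if j \<in> I then 0 else 1)"
proof -
  assume j: "1 \<le> j"
  have "{1..<Suc j} - I = (if j \<in> I then {1..<j} - I else insert j ({1..<j} - I))" using j by (auto simp: less_Suc_eq)
  then show ?thesis unfolding cc_def by (auto simp: card_insert_if)
qed

lemma cc_Suc_le: "cc I (Suc j) \<le> cc I j + 1"
proof -
  have "{1..<Suc j} - I \<subseteq> insert j ({1..<j} - I)" by auto
  then have "card ({1..<Suc j} - I) \<le> card (insert j ({1..<j} - I))" by (intro card_mono) auto
  also have "\<dots> \<le> card ({1..<j} - I) + 1" by (simp add: card_insert_if)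
  finally show ?thesis unfolding cc_def .
qed

lemma cc_le: "cc I j \<le> j - 1"
proof -
  have "card ({1..<j} - I) \<le> card {1..<j}" by (intro card_mono) auto
  then show ?thesis unfolding cc_def by simp
qed

lemma cc_mono: "j \<le> n \<Longrightarrow> cc I j \<le> cc I n"
  unfolding cc_def by (intro card_mono) auto

lemma cc_diff: "j \<le> n \<Longrightarrow> cc I n \<le> cc I j + (n - j)"
proof (induction n rule: dec_induct)
  case base then show ?case by simp
next
  case (step n)
  then show ?case using cc_Suc_le[of I n] by auto
qed

lemma F_spec_eq: "F_spec n I m = (m + cc I n) choose n"
proof -
  define S where "S = {i \<in> {1..n} \<rightarrow>\<^sub>E {1..m}.
      \<forall>j \<in> {1..<n}. i j \<le> i (Suc j) \<and> (j \<in> I \<longrightarrow> i j < i (Suc j))}"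
  define L where "L = {xs::nat list. sorted_wrt (<) xs \<and> length xs = n \<and> set xs \<subseteq> {1..m + cc I n}}"
  define \<phi> where "\<phi> i = map (\<lambda>j. i j + cc I j) [1..<Suc n]" for i :: "nat \<Rightarrow> nat"
  define \<psi> where "\<psi> xs = (\<lambda>j. if j \<in> {1..n} then xs!(j-1) - cc I j else undefined)" for xs :: "nat list"
  have ge: "xs!(j-1) \<ge> j" if "xs \<in> L" "j \<in> {1..n}" for xs j
  proof -
    have "xs!0 + (j - 1 - 0) \<le> xs!(j-1)"
      using strict_sorted_nth_ge[of xs 0 "j-1"] that unfolding L_def by auto
    moreover have "xs!0 \<ge> 1"
    proof -
      have "xs!0 \<in> set xs" using that unfolding L_def by (intro nth_mem) auto
      moreover have "set xs \<subseteq> {1..m + cc I n}" using that unfolding L_def by auto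
      ultimately have "xs!0 \<in> {1..m + cc I n}" by blast
      then show ?thesis by simp
    qed
    ultimately show ?thesis using that by auto
  qed
  have le: "xs!(j-1) + (n - j) \<le> m + cc I n" if "xs \<in> L" "j \<in> {1..n}" for xs j
  proof -
    have "xs!(j-1) + (n - 1 - (j - 1)) \<le> xs!(n-1)"
      using strict_sorted_nth_ge[of xs "j-1" "n-1"] that unfolding L_def by auto
    moreover have "xs!(n-1) \<le> m + cc I n"
    proof -
      have "xs!(n-1) \<in> set xs" using that unfolding L_def by (intro nth_mem) auto
      moreover have "set xs \<subseteq> {1..m + cc I n}" using that unfolding L_def by auto
      ultimately have "xs!(n-1) \<in> {1..m + cc I n}" by blast
      then show ?thesis by simp
    qed
    ultimately show ?thesis using that by auto
  qed
  have "bij_betw \<phi> S L"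
  proof (rule bij_betw_byWitness[where f'=\<psi>])
    show "\<forall>i\<in>S. \<psi> (\<phi> i) = i"
    proof
      fix i assume "i \<in> S"
      then have ext: "i \<in> extensional {1..n}" unfolding S_def by (auto simp: PiE_def)
      show "\<psi> (\<phi> i) = i"
      proof
        fix j show "\<psi> (\<phi> i) j = i j"
        proof (cases "j \<in> {1..n}")
          case True
          then have "\<phi> i ! (j - 1) = i j + cc I j" unfolding \<phi>_def
            by (subst map_upt1_nth) auto
          then show ?thesis using True by (simp add: \<psi>_def)
        next
          case False then show ?thesis using ext by (auto simp: \<psi>_def extensional_def)
        qed
      qed
    qed
    show "\<forall>xs\<in>L. \<phi> (\<psi> xs) = xs"
    proof
      fix xs assume xs: "xs \<in> L"
      then have len: "length xs = n" unfolding L_def by auto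
      show "\<phi> (\<psi> xs) = xs"
      proof (rule nth_equalityI)
        show "length (\<phi> (\<psi> xs)) = length xs" using len by (simp only: \<phi>_def map_upt1_length)
        fix t assume "t < length (\<phi> (\<psi> xs))"
        then have t: "t < n" by (simp only: \<phi>_def map_upt1_length)
        have "xs!t \<ge> Suc t" using ge[OF xs, of "Suc t"] t by auto
        moreover have "cc I (Suc t) \<le> t" using cc_le[of I "Suc t"] by simp
        moreover have "\<phi> (\<psi> xs) ! t = \<psi> xs (Suc t) + cc I (Suc t)"
          unfolding \<phi>_def using t by (rule map_upt1_nth)
        ultimately show "\<phi> (\<psi> xs) ! t = xs ! t" using t
          by (simp add: \<psi>_def)
      qed
    qed
    show "\<phi> ` S \<subseteq> L"
    proof
      fix ys assume "ys \<in> \<phi> ` S"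
      then obtain i where i: "i \<in> S" "ys = \<phi> i" by auto
      have rng: "i j \<in> {1..m}" if "j \<in> {1..n}" for j using i that unfolding S_def by auto
      have mon: "i j \<le> i (Suc j) \<and> (j \<in> I \<longrightarrow> i j < i (Suc j))" if "j \<in> {1..<n}" for j
        using i that unfolding S_def by auto
      have "sorted_wrt (<) ys"
        unfolding sorted_wrt_iff_nth_Suc_transp[of "(<)", OF transp_on_less]
      proof (intro allI impI)
        fix t assume "Suc t < length ys"
        then have t: "Suc t < n" using i by (simp only: \<phi>_def map_upt1_length)
        have "cc I (Suc (Suc t)) = cc I (Suc t) + (if Suc t \<in> I then 0 else 1)"
          by (rule cc_Suc) simp
        moreover have t1: "t < n" "Suc t < n" using t by auto
        moreover have "ys!t = i (Suc t) + cc I (Suc t)"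
          by (simp only: i(2) \<phi>_def map_upt1_nth[OF t1(1)])
        moreover have "ys!Suc t = i (Suc (Suc t)) + cc I (Suc (Suc t))"
          by (simp only: i(2) \<phi>_def map_upt1_nth[OF t1(2)])
        ultimately show "ys!t < ys!Suc t" using mon[of "Suc t"] t
          by (auto split: if_splits)
      qed
      moreover have "length ys = n" using i by (simp only: \<phi>_def map_upt1_length)
      moreover have "set ys \<subseteq> {1..m + cc I n}"
      proof
        fix y assume "y \<in> set ys"
        moreover have "set ys = (\<lambda>j. i j + cc I j) ` {1..<Suc n}"
          by (simp only: i(2) \<phi>_def set_map set_upt)
        ultimately obtain j where j: "j \<in> {1..n}" "y = i j + cc I j" by (auto simp: less_Suc_eq_le)
        then show "y \<in> {1..m + cc I n}" using rng[OF j(1)] cc_mono[of j n I] by auto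
      qed
      ultimately show "ys \<in> L" unfolding L_def by auto
    qed
    show "\<psi> ` L \<subseteq> S"
    proof
      fix i assume "i \<in> \<psi> ` L"
      then obtain xs where xs: "xs \<in> L" "i = \<psi> xs" by auto
      have "i \<in> {1..n} \<rightarrow>\<^sub>E {1..m}"
      proof (rule PiE_I)
        fix j assume j: "j \<in> {1..n}"
        have "xs!(j-1) \<ge> j" using ge[OF xs(1) j] .
        moreover have "cc I j \<le> j - 1" by (rule cc_le)
        moreover have "xs!(j-1) + (n - j) \<le> m + cc I n" using le[OF xs(1) j] .
        moreover have "cc I n \<le> cc I j + (n - j)" using j by (intro cc_diff) auto
        ultimately show "i j \<in> {1..m}" using xs(2) j by (auto simp: \<psi>_def)
      next
        fix j assume "j \<notin> {1..n}" then show "i j = undefined" using xs(2) by (auto simp: \<psi>_def)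
      qed
      moreover have "i j \<le> i (Suc j) \<and> (j \<in> I \<longrightarrow> i j < i (Suc j))" if j: "j \<in> {1..<n}" for j
      proof -
        have lt: "xs!(j-1) < xs!j" using xs(1) j unfolding L_def
          by (intro sorted_wrt_nth_less[of "(<)"]) auto
        have c: "cc I (Suc j) = cc I j + (if j \<in> I then 0 else 1)" using j by (intro cc_Suc) auto
        have "xs!(j-1) \<ge> j" using ge[OF xs(1), of j] j by auto
        moreover have "cc I j \<le> j - 1" by (rule cc_le)
        ultimately show ?thesis using lt c j xs(2) by (auto simp: \<psi>_def)
      qed
      ultimately show "i \<in> S" unfolding S_def by auto
    qed
  qed
  then have "card S = card L" by (rule bij_betw_same_card)
  also have "card L = (m + cc I n) choose n" unfolding L_def by (rule card_strict_lists)
  finally show ?thesis unfolding F_spec_def S_def .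
qed


definition bpoly :: "nat \<Rightarrow> nat \<Rightarrow> rat poly" where
  "bpoly n c = smult (1 / fact n) (\<Prod>k<n. [: of_nat c - of_nat k, 1 :])"

lemma poly_bpoly: "poly (bpoly n c) x = (\<Prod>k<n. x + of_nat c - of_nat k) / fact n"
  by (simp add: bpoly_def poly_prod algebra_simps)

lemma poly_bpoly_nat: "poly (bpoly n c) (of_nat m) = of_nat ((m + c) choose n)"
proof -
  have "of_nat ((m + c) choose n) = (of_nat (m + c) gchoose n :: rat)" by (rule binomial_gbinomial)
  also have "\<dots> = (\<Prod>i=0..<n. of_nat (m+c) - of_nat i) / fact n" by (simp add: gbinomial_prod_rev)
  also have "\<dots> = poly (bpoly n c) (of_nat m)" by (simp add: poly_bpoly atLeast0LessThan)
  finally show ?thesis by simp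
qed

lemma bpoly_recip:
  assumes "c + c' = n - 1"
  shows "pcompose (bpoly n c) [:0, -1:] = smult ((-1) ^ n) (bpoly n c')"
proof -
  have "poly (pcompose (bpoly n c) [:0, -1:]) x = poly (smult ((-1) ^ n) (bpoly n c')) x" for x
  proof (cases n)
    case 0 then show ?thesis by (simp add: poly_pcompose poly_bpoly)
  next
    case (Suc n')
    have "(-1) ^ n * (\<Prod>k<n. x + of_nat c' - of_nat k) = (\<Prod>k<n. - (x + of_nat c' - of_nat k))"
      by (subst prod_uminus) simp
    also have "\<dots> = (\<Prod>k<n. - (x + of_nat c' - of_nat (n - Suc k)))"
      by (rule prod.nat_diff_reindex[symmetric])
    also have "\<dots> = (\<Prod>k<n. - x + of_nat c - of_nat k)"
    proof (rule prod.cong[OF refl])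
      fix k assume "k \<in> {..<n}"
      then have "k \<le> n'" using Suc by auto
      moreover have "c + c' = n'" using assms Suc by simp
      ultimately have "(of_nat (n - Suc k) :: rat) = of_nat c + of_nat c' - of_nat k"
        using Suc by (simp add: of_nat_diff)
      then show "- (x + of_nat c' - of_nat (n - Suc k)) = - x + of_nat c - of_nat k" by simp
    qed
    finally show ?thesis by (simp add: poly_pcompose poly_bpoly)
  qed
  then show ?thesis by (intro poly_eq_poly_eq_iff[THEN iffD1] ext)
qed


lemma poly_eq_on_nats:
  fixes p q :: "rat poly"
  assumes "\<And>m::nat. poly p (of_nat m) = poly q (of_nat m)"
  shows "p = q"
proof (rule ccontr)
  assume "p \<noteq> q"
  then have "p - q \<noteq> 0" by simp
  then have "finite {x. poly (p - q) x = 0}" by (rule poly_roots_finite)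
  moreover have "range (of_nat :: nat \<Rightarrow> rat) \<subseteq> {x. poly (p - q) x = 0}" using assms by auto
  moreover have "infinite (range (of_nat :: nat \<Rightarrow> rat))"
    using range_inj_infinite[of "of_nat :: nat \<Rightarrow> rat"] inj_of_nat by blast
  ultimately show False using finite_subset by blast
qed

lemma redei_berge_eq:
  assumes "finite V"
  shows "redei_berge V E = (\<Sum>xs \<in> vertex_orders V. bpoly (card V) (cc (XDes E xs) (card V)))"
proof -
  let ?Q = "(\<Sum>xs \<in> vertex_orders V. bpoly (card V) (cc (XDes E xs) (card V)))"
  have Q: "poly ?Q (of_nat m) = of_nat (U_spec V E m)" for m :: nat
    by (simp add: U_spec_def poly_sum poly_bpoly_nat F_spec_eq)
  show ?thesis unfolding redei_berge_def
  proof (rule the_equality)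
    show "\<forall>m::nat. poly ?Q (of_nat m) = of_nat (U_spec V E m)" using Q by blast
    fix p :: "rat poly" assume "\<forall>m::nat. poly p (of_nat m) = of_nat (U_spec V E m)"
    then show "p = ?Q" using Q by (intro poly_eq_on_nats) auto
  qed
qed

lemma XDes_compl:
  assumes "xs \<in> vertex_orders V"
  shows "XDes (compl_edges V E) xs = {1..<length xs} - XDes E xs"
proof -
  have "xs!(i-1) \<in> V \<and> xs!i \<in> V \<and> xs!(i-1) \<noteq> xs!i" if "i \<in> {1..<length xs}" for i
  proof -
    have d: "distinct xs" "set xs = V" using assms by (auto simp: vertex_orders_def)
    have "i - 1 \<noteq> i" "i - 1 < length xs" "i < length xs" using that by auto
    then have "xs!(i-1) \<noteq> xs!i" using nth_eq_iff_index_eq[OF d(1)] by blast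
    then show ?thesis using d(2) that by auto
  qed
  then show ?thesis unfolding XDes_def compl_edges_def by auto
qed

lemma cc_compl:
  assumes "D \<subseteq> {1..<n}"
  shows "cc ({1..<n} - D) n = card D" "cc D n + card D = n - 1"
proof -
  have "{1..<n} - ({1..<n} - D) = D" using assms by auto
  then show "cc ({1..<n} - D) n = card D" by (simp add: cc_def)
  have "card ({1..<n} - D) = card {1..<n} - card D" using assms by (intro card_Diff_subset) (auto intro: finite_subset)
  moreover have "card D \<le> card {1..<n}" using assms by (intro card_mono) auto
  ultimately show "cc D n + card D = n - 1" by (simp add: cc_def)
qed

lemma smult_sum_right: "smult c (sum f A) = (\<Sum>x\<in>A. smult c (f x))"
  by (induction A rule: infinite_finite_induct) (auto simp: smult_add_right)

theorem mainTheorem15: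
  fixes V :: "'a set" and E :: "('a \<times> 'a) set"
  assumes "digraph V E"
  shows "pcompose (redei_berge V E) [:0, -1:]
           = smult ((-1) ^ card V) (redei_berge V (compl_edges V E))"
proof -
  have fin: "finite V" using assms by (simp add: digraph_def)
  let ?n = "card V"
  have "pcompose (redei_berge V E) [:0, -1:]
     = (\<Sum>xs \<in> vertex_orders V. pcompose (bpoly ?n (cc (XDes E xs) ?n)) [:0, -1:])"
    by (simp add: redei_berge_eq[OF fin] pcompose_sum)
  also have "\<dots> = (\<Sum>xs \<in> vertex_orders V. smult ((-1) ^ ?n) (bpoly ?n (cc (XDes (compl_edges V E) xs) ?n)))"
  proof (rule sum.cong[OF refl])
    fix xs assume xs: "xs \<in> vertex_orders V"
    then have len: "length xs = ?n" by (auto simp: vertex_orders_def distinct_card)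
    have sub: "XDes E xs \<subseteq> {1..<?n}" using len by (auto simp: XDes_def)
    have "XDes (compl_edges V E) xs = {1..<?n} - XDes E xs" using XDes_compl[OF xs] len by simp
    then have "cc (XDes (compl_edges V E) xs) ?n = card (XDes E xs)" using cc_compl(1)[OF sub] by simp
    then show "pcompose (bpoly ?n (cc (XDes E xs) ?n)) [:0, -1:]
      = smult ((-1) ^ ?n) (bpoly ?n (cc (XDes (compl_edges V E) xs) ?n))"
      using bpoly_recip cc_compl(2)[OF sub] by simp
  qed
  also have "\<dots> = smult ((-1) ^ card V) (redei_berge V (compl_edges V E))"
    by (simp add: redei_berge_eq[OF fin] smult_sum_right)
  finally show ?thesis .
qed

end
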